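(* For $a>0$ let $\delta^{(a)}=(\delta_0,\delta_1)=\left(\frac{a}{2a+1},\frac{a+1}{2a+1}\right)$ (the Bayes predictive decision for the symmetric Beta$(a,a)$ prior). Then $$\sup_{\theta\in[0,1]}R_{\delta^{(a)}}(\theta)=\begin{cases}\log\dfrac{2a+1}{a+1}, & a\ge 1/3,\\[2mm] \dfrac12\log\dfrac{a+1}{4a}+\log\dfrac{2a+1}{a+1}, & 0<a\le 1/3.\end{cases}$$
   Context: Bernoulli model: for $\theta\in[0,1]$, $p_\theta(x)=\theta^x(1-\theta)^{1-x}$, $x\in\{0,1\}$. A nonrandomized decision is a pair $\delta=(\delta_0,\delta_1)\in[0,1]^2$, used as the predictive distribution $p_\delta(y\mid x)=\delta_x^{\,y}(1-\delta_x)^{1-y}$ for a future $y\in\{0,1\}$ after observing $x$. The Kullback–Leibler risk is $R_\delta(\theta)=-S(\theta)+\theta^2\log\frac1{\delta_1}+\theta(1-\theta)\log\frac1{1-\delta_1}+\theta(1-\theta)\log\frac1{\delta_0}+(1-\theta)^2\log\frac1{1-\delta_0}$, where $S(\theta)=-\theta\log\theta-(1-\theta)\log(1-\theta)$ (with $0\log 0=0$) is the binary entropy. *)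

theory Defs
  imports "HOL-Analysis.Analysis"
begin

definition xlogx :: "real \<Rightarrow> real" where
  "xlogx t = (if t = 0 then 0 else t * ln t)"

definition binent :: "real \<Rightarrow> real" where
  "binent \<theta> = - xlogx \<theta> - xlogx (1 - \<theta>)"

definition KLrisk :: "real \<times> real \<Rightarrow> real \<Rightarrow> real" where
  "KLrisk d \<theta> = (case d of (d0, d1) \<Rightarrow>
      - binent \<theta>
      + \<theta>^2 * ln (1 / d1) + \<theta> * (1 - \<theta>) * ln (1 / (1 - d1))
      + \<theta> * (1 - \<theta>) * ln (1 / d0) + (1 - \<theta>)^2 * ln (1 / (1 - d0)))"

definition delta_beta :: "real \<Rightarrow> real \<times> real" where
  "delta_beta a = (a / (2*a + 1), (a + 1) / (2*a + 1))"

end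

theory Submission
  imports Defs
begin

lemma k1: fixes x :: real assumes "0 \<le> x" "x < 1" shows "0 \<le> 2*x/(1-x^2) - ln(1+x) + ln(1-x)"
proof -
  have "(\<lambda>t::real. 2*t/(1-t^2) - ln(1+t) + ln(1-t)) 0 \<le> (\<lambda>t. 2*t/(1-t^2) - ln(1+t) + ln(1-t)) x"
  proof (rule DERIV_nonneg_imp_nondecreasing[OF assms(1)])
    fix t :: real assume t: "0 \<le> t" "t \<le> x"
    have t1: "t < 1" using t assms by simp
    define w where "w = 1 - t^2"
    have wp: "w > 0" unfolding w_def using t t1
      by (simp add: power_less_one_iff)
    have nz: "1 - t^2 \<noteq> 0" using wp w_def by simp
    have "DERIV (\<lambda>t::real. 2*t/(1-t^2) - ln(1+t) + ln(1-t)) t :>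
        ((2*(1-t^2) - 2*t*(-(2*t)))/(1-t^2)^2 - 1/(1+t) + (-1)/(1-t))"
      using t t1 nz by (auto intro!: derivative_eq_intros simp: power2_eq_square)
    moreover have "1/(1+t) + 1/(1-t) = 2/w" unfolding w_def using t t1
      by (simp add: field_simps power2_eq_square)
    moreover have "(2*w + 4*t^2)/w^2 - 2/w = 4*t^2/w^2" using wp
      by (simp add: field_simps power2_eq_square)
    moreover have "(2*(1-t^2) - 2*t*(-(2*t)))/(1-t^2)^2 - 1/(1+t) + (-1)/(1-t)
        = (2*w + 4*t^2)/w^2 - (1/(1+t) + 1/(1-t))" unfolding w_def by (simp add: power2_eq_square)
    ultimately have "DERIV (\<lambda>t::real. 2*t/(1-t^2) - ln(1+t) + ln(1-t)) t :> 4*t^2/w^2"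
      by metis
    then show "\<exists>y. DERIV (\<lambda>t::real. 2*t/(1-t^2) - ln(1+t) + ln(1-t)) t :> y \<and> 0 \<le> y"
      using wp by (intro exI[of _ "4*t^2/w^2"]) auto
  qed
  then show ?thesis by simp
qed

lemma dk2: fixes t::real assumes "0 \<le> t" "t < 1" shows
 "DERIV (\<lambda>t::real. -(2+t)*ln(1+t) - (2-t)*ln(1-t)) t :>
        (-ln(1+t) - (2+t)/(1+t) + ln(1-t) + (2-t)/(1-t))"
proof -
  have a: "(0 + 1) / (1 + t) * (- 2 - t) = - ((2+t)/(1+t))" by (subst minus_divide_left) simp
  have b: "(0 - 1) / (1 - t) * (2 - t) = - ((2-t)/(1-t))" by simp
  show ?thesis
  apply (intro derivative_eq_intros)
  using assms apply simp_all
  unfolding a b by simp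
qed
lemma dk3: fixes t::real assumes "0 < t" "t < 1" shows
 "DERIV (\<lambda>t. ((1+t)*ln(1+t)+(1-t)*ln(1-t))/t^2) t :>
     (((ln(1+t) - ln(1-t))*t^2 - ((1+t)*ln(1+t)+(1-t)*ln(1-t))*(2*t))/(t^2)^2)"
proof -
  have a: "(0 + 1) / (1 + t) * (1 + t) = 1" using assms by simp
  have b: "(0 - 1) / (1 - t) * (1 - t) = -1" using assms by simp
  show ?thesis
  apply (intro derivative_eq_intros)
  using assms apply simp_all
  unfolding a b by simp
qed

lemma k2: fixes x :: real assumes "0 \<le> x" "x < 1" shows "0 \<le> -(2+x)*ln(1+x) - (2-x)*ln(1-x)"
proof -
  have "(\<lambda>t::real. -(2+t)*ln(1+t) - (2-t)*ln(1-t)) 0 \<le> (\<lambda>t. -(2+t)*ln(1+t) - (2-t)*ln(1-t)) x"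
  proof (rule DERIV_nonneg_imp_nondecreasing[OF assms(1)])
    fix t :: real assume t: "0 \<le> t" "t \<le> x"
    have t1: "t < 1" using t assms by simp
    have "t*t \<le> t" using t t1 by (intro mult_left_le_one_le) auto
    hence nz: "1 - t*t \<noteq> 0" "1 - t^2 \<noteq> 0" using t1 by (auto simp: power2_eq_square)
    have D: "DERIV (\<lambda>t::real. -(2+t)*ln(1+t) - (2-t)*ln(1-t)) t :>
        (-ln(1+t) - (2+t)/(1+t) + ln(1-t) + (2-t)/(1-t))"
      using t(1) t1 by (rule dk2)
    have Q: "(2-t)/(1-t) - (2+t)/(1+t) = 2*t/(1-t^2)"
    proof -
      have n1: "1 - t \<noteq> 0" "1 + t \<noteq> 0" using t t1 by auto
      have "(2-t)/(1-t) - (2+t)/(1+t) = ((2-t)*(1+t) - (2+t)*(1-t))/((1-t)*(1+t))"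
        by (rule diff_frac_eq) (use n1 in auto)
      also have "(2-t)*(1+t) - (2+t)*(1-t) = 2*t" by (simp add: algebra_simps)
      also have "(1-t)*(1+t) = 1-t^2" by (simp add: algebra_simps power2_eq_square)
      finally show ?thesis .
    qed
    have E: "(-ln(1+t) - (2+t)/(1+t) + ln(1-t) + (2-t)/(1-t)) = (2*t/(1-t^2) - ln(1+t) + ln(1-t))"
      using Q by linarith
    have "DERIV (\<lambda>t::real. -(2+t)*ln(1+t) - (2-t)*ln(1-t)) t :>
        (2*t/(1-t^2) - ln(1+t) + ln(1-t))"
      using D unfolding E .
    then show "\<exists>y. DERIV (\<lambda>t::real. -(2+t)*ln(1+t) - (2-t)*ln(1-t)) t :> y \<and> 0 \<le> y"
      using k1[OF t(1) t1] by blast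
  qed
  then show ?thesis by simp
qed

lemma k3: fixes x y :: real assumes "0 < x" "x \<le> y" "y < 1"
  shows "((1+x)*ln(1+x)+(1-x)*ln(1-x))/x^2 \<le> ((1+y)*ln(1+y)+(1-y)*ln(1-y))/y^2"
proof (rule DERIV_nonneg_imp_nondecreasing[OF assms(2), where f = "\<lambda>t. ((1+t)*ln(1+t)+(1-t)*ln(1-t))/t^2"])
  fix t :: real assume t: "x \<le> t" "t \<le> y"
  have t0: "0 < t" and t1: "t < 1" using t assms by auto
  have "t*t \<le> t" using t0 t1 by (intro mult_left_le_one_le) auto
  hence nz: "1 - t*t \<noteq> 0" "1 - t^2 \<noteq> 0" using t1 by (auto simp: power2_eq_square)
  have D: "DERIV (\<lambda>t. ((1+t)*ln(1+t)+(1-t)*ln(1-t))/t^2) t :>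
     (((ln(1+t) - ln(1-t))*t^2 - ((1+t)*ln(1+t)+(1-t)*ln(1-t))*(2*t))/(t^2)^2)"
    using t0 t1 by (rule dk3)
  have N: "(ln(1+t) - ln(1-t))*t^2 - ((1+t)*ln(1+t)+(1-t)*ln(1-t))*(2*t)
          = t * (-(2+t)*ln(1+t) - (2-t)*ln(1-t))"
    by (simp add: algebra_simps power2_eq_square)
  have T: "(t^2)^2 = t * t^3" by (simp add: power2_eq_square power3_eq_cube)
  have E: "(((ln(1+t) - ln(1-t))*t^2 - ((1+t)*ln(1+t)+(1-t)*ln(1-t))*(2*t))/(t^2)^2)
     = (-(2+t)*ln(1+t) - (2-t)*ln(1-t)) / t^3"
    unfolding N T using t0 by (rule nonzero_mult_divide_mult_cancel_left[OF less_imp_neq[symmetric]])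
  have P: "0 \<le> (-(2+t)*ln(1+t) - (2-t)*ln(1-t)) / t^3"
    using k2[of t] t0 t1 by simp
  show "\<exists>d. DERIV (\<lambda>t. ((1+t)*ln(1+t)+(1-t)*ln(1-t))/t^2) t :> d \<and> 0 \<le> d"
    using D P unfolding E by blast
qed

lemma l0: "((\<lambda>y::real. (1-y)*ln(1-y)) \<longlongrightarrow> 0) (at_left 1)"
proof -
  have ev: "\<forall>\<^sub>F y in at_left (1::real). y \<in> {0<..<1}"
    by (rule eventually_at_left_real) simp
  have f1: "filterlim (\<lambda>y::real. 1 - y) (at_right 0) (at_left 1)"
    unfolding filterlim_at
  proof
    show "\<forall>\<^sub>F y in at_left (1::real). 1 - y \<in> {0<..} \<and> 1 - y \<noteq> 0"
      using ev by eventually_elim auto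
    have "((\<lambda>y::real. 1 - y) \<longlongrightarrow> 1 - 1) (at_left 1)"
      by (intro tendsto_intros) 
    thus "((\<lambda>y::real. 1 - y) \<longlongrightarrow> 0) (at_left 1)" by simp
  qed
  have f2: "filterlim (\<lambda>y::real. inverse (1 - y)) at_top (at_left 1)"
    by (rule filterlim_compose[OF filterlim_inverse_at_top_right f1])
  have "((\<lambda>y::real. - (ln (inverse (1-y)) / inverse (1-y))) \<longlongrightarrow> - 0) (at_left 1)"
    by (intro tendsto_minus filterlim_compose[OF ln_x_over_x_tendsto_0 f2])
  moreover have "\<forall>\<^sub>F y in at_left (1::real). - (ln (inverse (1-y)) / inverse (1-y)) = (1-y)*ln(1-y)"
    using ev by eventually_elim (auto simp: ln_inverse divide_inverse)
  ultimately show ?thesis by (simp add: tendsto_cong)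
qed
lemma limR: "((\<lambda>y::real. ((1+y)*ln(1+y)+(1-y)*ln(1-y))/y^2) \<longlongrightarrow> 2*ln 2) (at_left 1)"
proof -
  have "((\<lambda>y::real. ((1+y)*ln(1+y)+(1-y)*ln(1-y))/y^2) \<longlongrightarrow> ((1+1)*ln(1+1) + 0)/1^2) (at_left 1)"
    by (intro tendsto_intros l0) auto
  thus ?thesis by simp
qed


lemma phi_bound: fixes x :: real assumes "0 < x" "x < 1"
  shows "(1+x)*ln(1+x)+(1-x)*ln(1-x) \<le> 2*ln 2 * x^2"
proof -
  have "((1+x)*ln(1+x)+(1-x)*ln(1-x))/x^2 \<le> 2*ln 2"
  proof (rule tendsto_lowerbound[OF limR])
    show "\<forall>\<^sub>F y in at_left 1. ((1+x)*ln(1+x)+(1-x)*ln(1-x))/x^2 \<le> ((1+y)*ln(1+y)+(1-y)*ln(1-y))/y^2"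
      using eventually_at_left_real[OF assms(2)] by eventually_elim (use assms k3 in auto)
  qed simp
  then show ?thesis using assms by (simp add: field_simps)
qed

lemma ent_lt: fixes p :: real assumes "0 < p" "p < 1/2"
  shows "4*ln 2*(p*(1-p)) \<le> -p*ln p - (1-p)*ln(1-p)"
proof -
  define x where "x = 1 - 2*p"
  have x: "0 < x" "x < 1" using assms by (auto simp: x_def)
  have e1: "1 + x = 2*(1-p)" and e2: "1 - x = 2*p" by (auto simp: x_def)
  have l1: "ln (2*(1-p)) = ln 2 + ln (1-p)" using assms by (intro ln_mult_pos) auto
  have l2: "ln (2*p) = ln 2 + ln p" using assms by (simp add: ln_mult)
  have "(1+x)*ln(1+x)+(1-x)*ln(1-x) \<le> 2*ln 2 * x^2" by (rule phi_bound[OF x])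
  hence "2*(1-p)*(ln 2 + ln (1-p)) + 2*p*(ln 2 + ln p) \<le> 2*ln 2*(1 - 4*(p*(1-p)))"
    unfolding e1 e2 l1 l2 by (simp add: x_def power2_eq_square algebra_simps)
  thus ?thesis by (simp add: algebra_simps)
qed

lemma ent: fixes p :: real assumes "0 < p" "p < 1"
  shows "4*ln 2*(p*(1-p)) \<le> -p*ln p - (1-p)*ln(1-p)"
proof -
  consider "p < 1/2" | "p = 1/2" | "p > 1/2" by linarith
  then show ?thesis
  proof cases
    case 1 then show ?thesis using ent_lt assms by auto
  next
    case 2
    have "ln (1/2::real) = - ln 2" by (simp add: ln_div)
    then show ?thesis unfolding 2 by simp
  next
    case 3
    have "4*ln 2*((1-p)*(1-(1-p))) \<le> -(1-p)*ln (1-p) - (1-(1-p))*ln(1-(1-p))"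
      using 3 assms by (intro ent_lt) auto
    then show ?thesis by (simp add: algebra_simps)
  qed
qed

lemma binent_bound: fixes p :: real assumes "0 \<le> p" "p \<le> 1"
  shows "4*ln 2*(p*(1-p)) \<le> binent p"
proof (cases "p = 0 \<or> p = 1")
  case True then show ?thesis by (auto simp: binent_def xlogx_def)
next
  case False
  hence "0 < p" "p < 1" using assms by auto
  then show ?thesis using ent[of p] by (simp add: binent_def xlogx_def)
qed

lemma risk_eq: fixes a t :: real assumes "a > 0"
  shows "KLrisk (delta_beta a) t = ln ((2*a+1)/(a+1)) + 2*ln((a+1)/a)*(t*(1-t)) - binent t"
proof -
  define M where "M = ln ((2*a+1)/(a+1))"
  define c where "c = ln ((a+1)/a)"
  have f1: "1 / ((a+1)/(2*a+1)) = (2*a+1)/(a+1)" by simp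
  have f2: "1 / (1 - (a+1)/(2*a+1)) = (2*a+1)/a" using assms by (simp add: field_simps)
  have f3: "1 / (a/(2*a+1)) = (2*a+1)/a" by simp
  have f4: "1 / (1 - a/(2*a+1)) = (2*a+1)/(a+1)" using assms by (simp add: field_simps)
  have "a + 1 > 0" using assms by simp
  have eq: "(2*a+1)/a = ((2*a+1)/(a+1)) * ((a+1)/a)" using assms by (simp add: divide_simps)
  have L: "ln ((2*a+1)/a) = M + c" unfolding M_def c_def using assms
    by (subst eq, intro ln_mult_pos) auto
  have "KLrisk (delta_beta a) t = - binent t + t^2 * M + t*(1-t)*(M+c) + t*(1-t)*(M+c) + (1-t)^2*M"
    unfolding KLrisk_def delta_beta_def using f1 f2 f3 f4 L by (simp add: M_def)
  also have "\<dots> = M + 2*c*(t*(1-t)) - binent t" by (simp add: algebra_simps power2_eq_square)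
  finally show ?thesis by (simp add: M_def c_def)
qed

theorem mainTheorem5:
  fixes a :: real
  assumes "a > 0"
  shows "(SUP \<theta>\<in>{0..1}. KLrisk (delta_beta a) \<theta>) =
           (if a \<ge> 1/3 then ln ((2*a + 1) / (a + 1))
            else (1/2) * ln ((a + 1) / (4*a)) + ln ((2*a + 1) / (a + 1)))"
proof -
  define M where "M = ln ((2*a+1)/(a+1))"
  define c where "c = ln ((a+1)/a)"
  have R: "\<And>t. KLrisk (delta_beta a) t = M + 2*c*(t*(1-t)) - binent t"
    using risk_eq[OF assms] by (simp add: M_def c_def)
  have l4: "ln (4::real) = 2 * ln 2"
    using ln_mult_pos[of 2 2] by simp
  have h: "(1/2) * ln ((a + 1) / (4*a)) = c/2 - ln 2"
  proof -
    have "(a+1)/(4*a) = ((a+1)/a) / 4" by simp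
    moreover have "ln (((a+1)/a)/4) = ln((a+1)/a) - ln 4" using assms by (intro ln_divide_pos) auto
    ultimately have "ln ((a+1)/(4*a)) = c - ln 4" unfolding c_def by (simp add: mult.commute)
    thus ?thesis using l4 by simp
  qed
  have cond: "(a \<ge> 1/3) \<longleftrightarrow> c \<le> 2 * ln 2"
  proof -
    have "c \<le> 2 * ln 2 \<longleftrightarrow> (a+1)/a \<le> 4" unfolding c_def l4[symmetric] using assms
      by (subst ln_le_cancel_iff) auto
    also have "\<dots> \<longleftrightarrow> a \<ge> 1/3" using assms by (simp add: field_simps)
    finally show ?thesis by simp
  qed
  define V where "V = (if c \<le> 2 * ln 2 then M else M + (c/2 - ln 2))"
  have RHS: "(if a \<ge> 1/3 then ln ((2*a + 1) / (a + 1))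
            else (1/2) * ln ((a + 1) / (4*a)) + ln ((2*a + 1) / (a + 1))) = V"
    unfolding V_def cond h M_def by simp
  have b0: "binent 0 = 0" by (simp add: binent_def xlogx_def)
  have bh: "binent (1/2) = ln 2"
  proof -
    have "ln (1/2::real) = - ln 2" by (simp add: ln_div)
    thus ?thesis by (simp add: binent_def xlogx_def)
  qed
  have mem: "V \<in> (\<lambda>t. KLrisk (delta_beta a) t) ` {0..1}"
  proof (cases "c \<le> 2 * ln 2")
    case True
    hence "V = KLrisk (delta_beta a) 0" unfolding V_def R using b0 by simp
    thus ?thesis by force
  next
    case False
    hence "V = KLrisk (delta_beta a) (1/2)" unfolding V_def R using bh by simp
    thus ?thesis by force
  qed
  have ub: "KLrisk (delta_beta a) t \<le> V" if t: "t \<in> {0..1}" for t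
  proof -
    define u where "u = t*(1-t)"
    have u0: "0 \<le> u" using t unfolding u_def by auto
    have u1: "u \<le> 1/4"
    proof -
      have "0 \<le> (t - 1/2)^2" by simp
      thus ?thesis unfolding u_def by (simp add: power2_eq_square algebra_simps)
    qed
    have B: "4*ln 2*u \<le> binent t" using binent_bound[of t] t unfolding u_def by auto
    show ?thesis
    proof (cases "c \<le> 2 * ln 2")
      case True
      have "u*(c - 2*ln 2) \<le> 0" using True u0 by (simp add: mult_nonneg_nonpos)
      thus ?thesis unfolding V_def R u_def[symmetric] using True B by (simp add: algebra_simps)
    next
      case False
      have "0 \<le> (c - 2*ln 2)*(1/2 - 2*u)" using False u1 by simp
      thus ?thesis unfolding V_def R u_def[symmetric] using False B by (simp add: algebra_simps)
    qed
  qed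
  have "(SUP \<theta>\<in>{0..1}. KLrisk (delta_beta a) \<theta>) = V"
    by (rule cSup_eq_maximum[OF mem]) (use ub in auto)
  thus ?thesis using RHS by simp
qed

end
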